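(* Let $p$ be a prime. Then $\mathcal{M}_p\subseteq\{1,2,6,42,1806\}\cup p\cdot\mathcal{W}$.
   Context: For positive integers $k,n$ let $S_k(n)=\sum_{i=1}^{n} i^k$. For an integer $a$, $\mathcal{M}_a$ denotes the set of positive integers $n$ such that $S_n(n)\equiv a\pmod{n}$. A positive integer $n$ is a weak primary pseudoperfect number if $\sum_{q\mid n,\ q\text{ prime}} \frac{n}{q}+1\equiv 0\pmod{n}$; $\mathcal{W}$ denotes the set of weak primary pseudoperfect numbers. For a set $A$ and integer $c$, $c\cdot A=\{ca: a\in A\}$. *)

theory Defs
  imports "HOL-Computational_Algebra.Primes" "HOL-Number_Theory.Cong"
begin

definition S :: "nat \<Rightarrow> nat \<Rightarrow> nat" where
  "S k n = (\<Sum>i=1..n. i ^ k)"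

definition M :: "int \<Rightarrow> nat set" where
  "M a = {n. n > 0 \<and> [int (S n n) = a] (mod int n)}"

definition W :: "nat set" where
  "W = {n. n > 0 \<and> [(\<Sum>q\<in>{q. prime q \<and> q dvd n}. n div q) + 1 = 0] (mod n)}"

end

theory Submission
  imports Defs "HOL-Number_Theory.Number_Theory"
begin

lemma S_split: assumes "n > 0" shows "S n n = (\<Sum>i<n. i^n) + n^n"
proof -
  have a: "{1..n} = insert n {1..<n}" using assms by auto
  have b: "{..<n} = insert 0 {1..<n}" using assms by auto
  show ?thesis unfolding S_def a b using assms by simp
qed

lemma card_mult: assumes "q > 0" "q dvd n" shows "card {i\<in>{..<n}. q dvd (i::nat)} = n div q"
proof -
  obtain k where k: "n = q*k" using assms by auto
  have nk: "n div q = k" using k assms by simp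
  have "{i\<in>{..<n}. q dvd i} = (\<lambda>j. q*j) ` {..<n div q}"
  proof -
    have "i \<in> (\<lambda>j. q*j) ` {..<n div q}" if h: "i < n" "q dvd i" for i
    proof -
      obtain j where j: "i = q*j" using h by auto
      then have "j < n div q" using h assms k nk by simp
      then show ?thesis using j by auto
    qed
    moreover have "q*j < n" if "j < n div q" for j
      using that assms k nk by simp
    ultimately show ?thesis by auto
  qed
  moreover have "inj_on (\<lambda>j. q*j) {..<n div q}" using assms by (auto simp: inj_on_def)
  ultimately show ?thesis by (simp add: card_image)
qed

lemma common:
  assumes q: "prime q" and n: "n > 0" and e: "q^e dvd n"
  shows "[S n n = (\<Sum>i\<in>{i\<in>{..<n}. \<not> q dvd i}. i^n)] (mod q^e)"
proof -
  let ?U = "{i\<in>{..<n}. \<not> q dvd i}" and ?V = "{i\<in>{..<n}. q dvd i}"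
  have un: "{..<n} = ?U \<union> ?V" by auto
  have "(\<Sum>i<n. i^n) = (\<Sum>i\<in>?U. i^n) + (\<Sum>i\<in>?V. i^n)"
    by (subst un, rule sum.union_disjoint) auto
  have "e < 2^e" by (rule less_exp)
  also have "2^e \<le> q^e" using prime_ge_2_nat[OF q] by (simp add: power_mono)
  finally have "e < q^e" .
  moreover have "q^e \<le> n" using e n by (simp add: dvd_imp_le)
  ultimately have en: "e \<le> n" by linarith
  have "q^e dvd (\<Sum>i\<in>?V. i^n)"
  proof (rule dvd_sum)
    fix i assume "i \<in> ?V"
    then obtain j where "i = q*j" by auto
    then have "q^n dvd i^n" by (simp add: power_mult_distrib)
    then show "q^e dvd i^n" using en by (meson dvd_trans le_imp_power_dvd)
  qed
  moreover have "q^e dvd n^n" using e n by (simp add: dvd_power dvd_trans)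
  ultimately have "[(\<Sum>i\<in>?V. i^n) + n^n = 0] (mod q^e)" by (simp add: cong_0_iff)
  then have "[(\<Sum>i\<in>?U. i^n) + ((\<Sum>i\<in>?V. i^n) + n^n) = (\<Sum>i\<in>?U. i^n) + 0] (mod q^e)"
    by (intro cong_add cong_refl)
  then show ?thesis using S_split[OF n] \<open>(\<Sum>i<n. i^n) = _\<close> by (simp add: add.assoc)
qed

lemma F1:
  assumes q: "prime q" and n: "n > 0" and e: "q^e dvd n" and e1: "e \<ge> 1" and d: "(q - 1) dvd n"
  shows "[S n n = n - n div q] (mod q^e)"
proof -
  let ?U = "{i\<in>{..<n}. \<not> q dvd i}" and ?V = "{i\<in>{..<n}. q dvd i}"
  have qn: "q dvd n" using e e1 by (meson dvd_power dvd_trans le_numeral_extra(2) order.strict_trans2 less_one not_le)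
  have tot: "totient (q^e) dvd n"
  proof -
    have "totient (q^e) = q^(e-1) * (q-1)" using totient_prime_power[OF q] e1 by simp
    moreover have "q^(e-1) dvd n" using e by (meson diff_le_self dvd_trans le_imp_power_dvd)
    moreover have "coprime (q^(e-1)) (q-1)"
      using q by (metis coprime_diff_one_right_nat coprime_power_left_iff prime_gt_0_nat)
    ultimately show ?thesis using d by (simp add: divides_mult)
  qed
  have "[(\<Sum>i\<in>?U. i^n) = (\<Sum>i\<in>?U. 1)] (mod q^e)"
  proof (rule cong_sum)
    fix i assume "i \<in> ?U"
    then have "coprime q i" using q by (simp add: prime_imp_coprime)
    then have "coprime i (q^e)" by (simp add: coprime_commute)
    then have "[i ^ totient (q^e) = 1] (mod q^e)" by (rule euler_theorem)
    then have "[(i ^ totient (q^e))^(n div totient (q^e)) = 1^(n div totient (q^e))] (mod q^e)"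
      by (rule cong_pow)
    then show "[i^n = 1] (mod q^e)" using tot by (simp add: power_mult[symmetric])
  qed
  moreover have "card ?U = n - n div q"
  proof -
    have "?U = {..<n} - ?V" by auto
    moreover have "card ({..<n} - ?V) = card {..<n} - card ?V" by (rule card_Diff_subset) auto
    ultimately have "card ?U = card {..<n} - card ?V" by simp
    then show ?thesis using card_mult[OF prime_gt_0_nat[OF q] qn] by simp
  qed
  ultimately show ?thesis using common[OF q n e] by (simp add: cong_trans)
qed

lemma F2:
  assumes q: "prime q" and n: "n > 0" and e: "q^e dvd n" and qn: "q dvd n" and d: "\<not> (q - 1) dvd n"
  shows "[S n n = 0] (mod q^e)"
proof -
  let ?U = "{i\<in>{..<n}. \<not> q dvd i}"
  obtain r where "residue_primroot q r" using prime_primitive_root_exists[OF prime_gt_1_nat[OF q] q] by blast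
  then have cr: "coprime q r" and ordr: "ord q r = q - 1"
    by (auto simp: residue_primroot_def totient_prime[OF q])
  define m where "m = n div q ^ multiplicity q n"
  have qm: "\<not> q dvd m" unfolding m_def using n q by (intro multiplicity_decompose) auto
  have nm: "n = q^multiplicity q n * m" unfolding m_def using multiplicity_dvd[of q n] by simp
  have "coprime q m" using qm q by (simp add: prime_imp_coprime)
  then obtain g where g1: "[g = r] (mod q)" and g2: "[g = 1] (mod m)"
    using binary_chinese_remainder_nat by blast
  have cgq: "coprime g q" using cong_imp_coprime[OF cong_sym[OF g1]] cr by (simp add: coprime_commute)
  have cgm: "coprime g m" using cong_imp_coprime[OF cong_sym[OF g2]] by simp
  have cgn: "coprime g n" using cgq cgm by (subst nm) simp
  have g0: "g > 0" using cgq q by (cases "g = 0") auto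
  have ng: "\<not> [g^n = 1] (mod q)"
  proof
    assume "[g^n = 1] (mod q)"
    then have "[r^n = 1] (mod q)" using cong_pow[OF g1, of n] by (metis cong_sym cong_trans)
    then have "ord q r dvd n" using ord_divides by blast
    then show False using ordr d by simp
  qed
  define h where "h i = g*i mod n" for i
  have hU: "h ` ?U \<subseteq> ?U"
  proof
    fix x assume "x \<in> h ` ?U"
    then obtain i where i: "i \<in> ?U" "x = h i" by auto
    have "x < n" using i n by (simp add: h_def)
    moreover have "\<not> q dvd x"
    proof
      assume "q dvd x"
      then have "q dvd g*i" using qn i by (simp add: h_def dvd_mod_iff)
      then have "q dvd g \<or> q dvd i" using q prime_dvd_mult_iff by blast
      moreover have "\<not> q dvd g" using cgq q coprime_common_divisor[of g q q] by auto
      ultimately show False using i by simp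
    qed
    ultimately show "x \<in> ?U" by simp
  qed
  have hinj: "inj_on h ?U"
  proof
    fix i j assume i: "i \<in> ?U" and j: "j \<in> ?U" and "h i = h j"
    then have "[g*i = g*j] (mod n)" by (simp add: h_def cong_def)
    then have "[i = j] (mod n)" using cgn by (simp add: cong_mult_lcancel_nat)
    then show "i = j" using i j by (simp add: cong_def)
  qed
  have hUU: "h ` ?U = ?U" by (rule endo_inj_surj[OF _ hU hinj]) auto
  define X where "X = (\<Sum>i\<in>?U. i^n)"
  have "X = (\<Sum>i\<in>h ` ?U. i^n)" using hUU X_def by simp
  also have "\<dots> = (\<Sum>i\<in>?U. (h i)^n)" using hinj by (simp add: sum.reindex)
  finally have X1: "X = (\<Sum>i\<in>?U. (h i)^n)" .
  have "[(\<Sum>i\<in>?U. (h i)^n) = (\<Sum>i\<in>?U. (g*i)^n)] (mod q^e)"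
  proof (rule cong_sum)
    fix i
    have "[h i = g*i] (mod q^e)" using e by (simp add: h_def cong_def mod_mod_cancel)
    then show "[(h i)^n = (g*i)^n] (mod q^e)" by (rule cong_pow)
  qed
  moreover have "(\<Sum>i\<in>?U. (g*i)^n) = g^n * X"
    by (simp add: X_def power_mult_distrib sum_distrib_left)
  ultimately have "[g^n * X = 1 * X] (mod q^e)" using X1 by (simp add: cong_sym)
  moreover have "g^n * X \<ge> 1 * X" using g0 by simp
  ultimately have "q^e dvd g^n * X - 1 * X" using cong_altdef_nat by blast
  then have dv: "q^e dvd (g^n - 1) * X" by (simp add: diff_mult_distrib)
  have "g^n \<ge> 1" using g0 by simp
  then have "\<not> q dvd (g^n - 1)" using ng cong_altdef_nat by blast
  then have "coprime q (g^n - 1)" using q by (simp add: prime_imp_coprime)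
  then have "coprime (q^e) (g^n - 1)" by simp
  then have "q^e dvd X" using dv coprime_dvd_mult_right_iff by blast
  then show ?thesis using common[OF q n e] X_def by (metis cong_0_iff cong_trans)
qed

lemma F1i:
  assumes q: "prime q" and n: "n > 0" and e: "q^e dvd n" and e1: "e \<ge> 1" and d: "(q - 1) dvd n"
  shows "int (q^e) dvd int (S n n) - (int n - int (n div q))"
proof -
  have "[int (S n n) = int (n - n div q)] (mod int (q^e))"
    using F1[OF assms] by (simp only: cong_int_iff)
  then have h: "int (q^e) dvd int (S n n) - int (n - n div q)" by (simp only: cong_iff_dvd_diff)
  then show ?thesis by (simp add: of_nat_diff)
qed

lemma F2i:
  assumes q: "prime q" and n: "n > 0" and e: "q^e dvd n" and qn: "q dvd n" and d: "\<not> (q - 1) dvd n"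
  shows "int (q^e) dvd int (S n n)"
  using F2[OF assms] unfolding cong_0_iff int_dvd_int_iff .

lemma factA:
  assumes p: "prime p" and q: "prime q" and qp: "q \<noteq> p" and n: "n > 0" and qn: "q dvd n"
    and h: "int n dvd int (S n n) - int p"
  shows "(q - 1) dvd n \<and> \<not> q^2 dvd n \<and> int q dvd int (n div q) + int p"
proof -
  have nqp: "\<not> q dvd p" using p q qp by (auto simp: prime_nat_iff)
  then have nqp': "\<not> int q dvd int p" by simp
  have hq: "int q dvd int (S n n) - int p" using h qn by (meson dvd_trans of_nat_dvd_iff)
  have d: "(q - 1) dvd n"
  proof (rule ccontr)
    assume "\<not> (q - 1) dvd n"
    then have "int (q^1) dvd int (S n n)" by (intro F2i[OF q n _ qn]) (use qn in simp_all)
    then have hs: "int q dvd int (S n n)" by simp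
    have "int q dvd int (S n n) - (int (S n n) - int p)" by (rule dvd_diff[OF hs hq])
    then have "int q dvd int p" by simp
    then show False using nqp' by simp
  qed
  have f: "int q dvd int (S n n) - (int n - int (n div q))" using F1i[OF q n _ _ d, of 1] qn by simp
  have qn': "int q dvd int n" using qn by simp
  have "int q dvd (int (S n n) - int p) - (int (S n n) - (int n - int (n div q))) - int n"
    by (rule dvd_diff[OF dvd_diff[OF hq f] qn'])
  moreover have "(int (S n n) - int p) - (int (S n n) - (int n - int (n div q))) - int n
      = - (int (n div q) + int p)" by simp
  ultimately have "int q dvd - (int (n div q) + int p)" by simp
  then have key: "int q dvd int (n div q) + int p" by (simp only: dvd_minus_iff)
  have "\<not> q^2 dvd n"
  proof
    assume "q^2 dvd n"
    then obtain k where "n = q^2 * k" by auto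
    then have "n div q = q * k" using prime_gt_0_nat[OF q] by (simp add: power2_eq_square)
    then have "q dvd n div q" by simp
    then have "int q dvd int (n div q)" by simp
    then have "int q dvd int p" using key by (metis dvd_add_right_iff)
    then show False using nqp' by simp
  qed
  then show ?thesis using d key by simp
qed

lemma factB:
  assumes p: "prime p" and n: "n > 0" and pn2: "p^2 dvd n"
    and h: "int n dvd int (S n n) - int p"
  shows "int p dvd int (n div p^2) + 1"
proof -
  have pn: "p dvd n" using pn2 by (meson dvd_power dvd_trans zero_less_numeral)
  have hp2: "int (p^2) dvd int (S n n) - int p" using h pn2 by (meson dvd_trans of_nat_dvd_iff)
  have p2: "p \<ge> 2" using p by (rule prime_ge_2_nat)
  have d: "(p - 1) dvd n"
  proof (rule ccontr)
    assume "\<not> (p - 1) dvd n"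
    then have hs: "int (p^2) dvd int (S n n)" by (rule F2i[OF p n pn2 pn])
    have "int (p^2) dvd int (S n n) - (int (S n n) - int p)" by (rule dvd_diff[OF hs hp2])
    then have "int (p^2) dvd int p" by simp
    then have "p^2 dvd p" by (simp only: int_dvd_int_iff)
    then have "p^2 \<le> p" using p2 by (simp add: dvd_imp_le)
    moreover have "p^2 \<ge> 2 * p" using p2 by (simp add: power2_eq_square)
    ultimately show False using p2 by linarith
  qed
  have f: "int (p^2) dvd int (S n n) - (int n - int (n div p))" by (rule F1i[OF p n pn2 _ d]) simp
  obtain m where m: "n = p^2 * m" using pn2 by auto
  have nm: "n div p^2 = m" using m p2 by simp
  have np: "n div p = p * m" using m p2 by (simp add: power2_eq_square)
  have "int (p^2) dvd (int (S n n) - int p) - (int (S n n) - (int n - int (n div p))) - int n"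
    by (rule dvd_diff[OF dvd_diff[OF hp2 f]]) (simp only: int_dvd_int_iff pn2)
  moreover have "(int (S n n) - int p) - (int (S n n) - (int n - int (n div p))) - int n
      = - (int p * (int m + 1))" using np by (simp add: algebra_simps)
  ultimately have "int p * int p dvd int p * (int m + 1)" by (simp add: power2_eq_square)
  then have "int p dvd int m + 1" using p2 by simp
  then show ?thesis using nm by simp
qed

lemma div1806: assumes "d dvd (1806::nat)"
  shows "d \<in> {1,2,3,6,7,14,21,42,43,86,129,258,301,602,903,1806}"
proof -
  have dvd_p: "x = 1 \<or> x = p" if "prime (p::nat)" "x dvd p" for x p
    using that prime_nat_iff by auto
  have p7: "prime (7::nat)" by code_simp
  have p43: "prime (43::nat)" by code_simp
  have "d dvd 2 * (3 * (7 * 43))" using assms by simp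
  then obtain a r where a: "a dvd 2" and r: "r dvd 3 * (7*43)" and d: "d = a * r" by (metis dvd_productE)
  then obtain b s where b: "b dvd 3" and s: "s dvd 7*43" and r: "r = b * s" by (metis dvd_productE)
  then obtain c e where c: "c dvd 7" and e: "e dvd 43" and s: "s = c * e" by (metis dvd_productE)
  have "a = 1 \<or> a = 2" using dvd_p[OF _ a] by simp
  moreover have "b = 1 \<or> b = 3" using dvd_p[OF _ b] by simp
  moreover have "c = 1 \<or> c = 7" using dvd_p[OF p7 c] by simp
  moreover have "e = 1 \<or> e = 43" using dvd_p[OF p43 e] by simp
  ultimately show ?thesis using d r s by auto
qed
lemma c1: assumes "q dvd (1806::nat)" "prime (q+1)" shows "q+1 \<in> {2,3,7,43}"
proof (rule ccontr)
  assume nq: "q+1 \<notin> {2,3,7,43}"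
  have np: "\<not> prime n" if "(k::nat) dvd n" "1 < k" "k < n" for k n
    using that prime_nat_iff by auto
  have "q \<in> {1,2,3,6,7,14,21,42,43,86,129,258,301,602,903,1806}" by (rule div1806[OF assms(1)])
  then have "q = 3 \<or> q = 7 \<or> q = 14 \<or> q = 21 \<or> q = 43 \<or> q = 86 \<or> q = 129 \<or> q = 258 \<or> q = 301
     \<or> q = 602 \<or> q = 903 \<or> q = 1806" using nq by auto
  then have "\<not> prime (q+1)"
  proof (elim disjE)
    assume "q = 3" then show ?thesis by (intro np[of 2]) simp_all
  next assume "q = 7" then show ?thesis by (intro np[of 2]) simp_all
  next assume "q = 14" then show ?thesis by (intro np[of 3]) simp_all
  next assume "q = 21" then show ?thesis by (intro np[of 2]) simp_all
  next assume "q = 43" then show ?thesis by (intro np[of 2]) simp_all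
  next assume "q = 86" then show ?thesis by (intro np[of 3]) simp_all
  next assume "q = 129" then show ?thesis by (intro np[of 2]) simp_all
  next assume "q = 258" then show ?thesis by (intro np[of 7]) simp_all
  next assume "q = 301" then show ?thesis by (intro np[of 2]) simp_all
  next assume "q = 602" then show ?thesis by (intro np[of 3]) simp_all
  next assume "q = 903" then show ?thesis by (intro np[of 2]) simp_all
  next assume "q = 1806" then show ?thesis by (intro np[of 13]) simp_all
  qed
  then show False using assms(2) by contradiction
qed

lemma c2: assumes "n dvd (1806::nat)" "3 dvd n \<Longrightarrow> 2 dvd n" "7 dvd n \<Longrightarrow> 6 dvd n" "43 dvd n \<Longrightarrow> 42 dvd n"
  shows "n \<in> {1,2,6,42,1806}"
  using div1806[OF assms(1)] assms(2-4) by auto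


lemma to1806:
  assumes d: "(d::nat) \<noteq> 0" and m: "\<And>r. prime r \<Longrightarrow> multiplicity r d \<le> 1"
    and ps: "\<And>r. prime r \<Longrightarrow> r dvd d \<Longrightarrow> r \<in> {2,3,7,43}"
  shows "d dvd 1806"
proof (rule multiplicity_le_imp_dvd[OF d])
  fix r :: nat assume r: "prime r"
  show "multiplicity r d \<le> multiplicity r 1806"
  proof (cases "r dvd d")
    case True
    then have "r \<in> {2,3,7,43}" using ps r by blast
    then have "r dvd 1806" by auto
    then have "0 < multiplicity r (1806::nat)"
      by (intro multiplicity_gt_zero_iff[THEN iffD2]) (use r in \<open>auto simp: not_prime_unit\<close>)
    then show ?thesis using m[OF r] by linarith
  next
    case False
    then show ?thesis by (simp add: not_dvd_imp_multiplicity_0)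
  qed
qed

lemma classify:
  fixes n :: nat
  assumes n: "n > 0" and h: "\<And>q. prime q \<Longrightarrow> q dvd n \<Longrightarrow> (q - 1) dvd n \<and> \<not> q^2 dvd n"
  shows "n \<in> {1,2,6,42,1806}"
proof -
  have mn: "multiplicity r n \<le> 1" if r: "prime r" for r
  proof (cases "r dvd n")
    case True
    then have "\<not> r^2 dvd n" using h r by blast
    moreover have "r \<noteq> Suc 0" using r by auto
    ultimately show ?thesis using power_dvd_iff_le_multiplicity[of n r 2] n r by (simp add: not_prime_unit)
  next
    case False
    then show ?thesis by (simp add: not_dvd_imp_multiplicity_0)
  qed
  have md: "multiplicity r d \<le> 1" if "prime r" "d dvd n" for r d
    using dvd_imp_multiplicity_le[of d n r] that n mn[of r] by simp
  have pr: "prime q \<longrightarrow> q dvd n \<longrightarrow> q \<in> {2,3,7,43}" for q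
  proof (induction q rule: less_induct)
    case (less q)
    show ?case
    proof (intro impI)
      assume q: "prime q" and qn: "q dvd n"
      have dn: "(q - 1) dvd n" using h q qn by blast
      have q2: "q \<ge> 2" using q by (rule prime_ge_2_nat)
      have "(q - 1) dvd 1806"
      proof (rule to1806)
        show "q - 1 \<noteq> 0" using q2 by simp
        show "multiplicity r (q - 1) \<le> 1" if "prime r" for r using md[OF that dn] .
        show "r \<in> {2,3,7,43}" if r: "prime r" "r dvd q - 1" for r
        proof -
          have "r \<le> q - 1" using r q2 by (simp add: dvd_imp_le)
          then have "r < q" using q2 by linarith
          moreover have "r dvd n" using r dn by (meson dvd_trans)
          ultimately show ?thesis using less.IH r by blast
        qed
      qed
      moreover have "prime (q - 1 + 1)" using q q2 by simp
      ultimately have "q - 1 + 1 \<in> {2,3,7,43}" by (rule c1)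
      then show "q \<in> {2,3,7,43}" using q2 by simp
    qed
  qed
  have "n dvd 1806" using to1806[of n] n mn pr by simp
  moreover have "3 dvd n \<Longrightarrow> 2 dvd n" using h[of 3] by simp
  moreover have "prime (7::nat)" by code_simp
  then have "7 dvd n \<Longrightarrow> 6 dvd n" using h[of 7] by simp
  moreover have "prime (43::nat)" by code_simp
  then have "43 dvd n \<Longrightarrow> 42 dvd n" using h[of 43] by simp
  ultimately show ?thesis by (rule c2)
qed

lemma inW:
  assumes w: "w > 0" and m: "\<And>q. prime q \<Longrightarrow> multiplicity q w \<le> 1"
    and c: "\<And>q. prime q \<Longrightarrow> q dvd w \<Longrightarrow> q dvd (w div q + 1)"
  shows "w \<in> W"
proof -
  let ?P = "{q. prime q \<and> q dvd w}"
  define X where "X = (\<Sum>q\<in>?P. w div q) + 1"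
  have fin: "finite ?P" by (rule finite_subset[of _ "{..w}"]) (use w in \<open>auto simp: dvd_imp_le\<close>)
  have rX: "r dvd X" if r: "prime r" "r dvd w" for r
  proof -
    have rP: "r \<in> ?P" using r by simp
    have "(\<Sum>q\<in>?P. w div q) = w div r + (\<Sum>q\<in>?P - {r}. w div q)"
      using fin rP by (simp add: sum.remove)
    moreover have "r dvd (\<Sum>q\<in>?P - {r}. w div q)"
    proof (rule dvd_sum)
      fix q assume q: "q \<in> ?P - {r}"
      then have "w = q * (w div q)" by simp
      then have "r dvd q * (w div q)" using r by simp
      moreover have "\<not> r dvd q" using q r primes_dvd_imp_eq[of r q] by auto
      ultimately show "r dvd w div q" using r prime_dvd_mult_iff by blast
    qed
    ultimately have XX: "X = (w div r + 1) + (\<Sum>q\<in>?P - {r}. w div q)" by (simp add: X_def)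
    have "r dvd (w div r + 1) + (\<Sum>q\<in>?P - {r}. w div q)"
      by (rule dvd_add[OF c[OF r] \<open>r dvd (\<Sum>q\<in>?P - {r}. w div q)\<close>])
    then show ?thesis unfolding XX .
  qed
  have "w dvd X"
  proof (rule multiplicity_le_imp_dvd)
    show "w \<noteq> 0" using w by simp
    fix r :: nat assume r: "prime r"
    show "multiplicity r w \<le> multiplicity r X"
    proof (cases "r dvd w")
      case True
      have "0 < multiplicity r X"
        by (intro multiplicity_gt_zero_iff[THEN iffD2]) (use r rX[OF r True] in \<open>auto simp: X_def not_prime_unit\<close>)
      then show ?thesis using m[OF r] by linarith
    next
      case False
      then show ?thesis by (simp add: not_dvd_imp_multiplicity_0)
    qed
  qed
  then show ?thesis unfolding W_def using w by (simp add: X_def cong_0_iff)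
qed

theorem mainTheorem13:
  fixes p :: nat
  assumes "prime p"
  shows "M (int p) \<subseteq> {1, 2, 6, 42, 1806} \<union> (\<lambda>w. p * w) ` W"
proof
  fix n assume "n \<in> M (int p)"
  then have n: "n > 0" and hc: "[int (S n n) = int p] (mod int n)" by (auto simp: M_def)
  have h: "int n dvd int (S n n) - int p" using hc by (simp only: cong_iff_dvd_diff)
  have p: "prime p" by fact
  have p2: "p \<ge> 2" using p by (rule prime_ge_2_nat)
  show "n \<in> {1, 2, 6, 42, 1806} \<union> (\<lambda>w. p * w) ` W"
  proof (cases "p dvd n")
    case False
    have "n \<in> {1, 2, 6, 42, 1806}"
    proof (rule classify[OF n])
      fix q assume q: "prime q" "q dvd n"
      then have "q \<noteq> p" using False by auto
      then show "(q - 1) dvd n \<and> \<not> q^2 dvd n" using factA[OF p q(1) _ n q(2) h] by simp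
    qed
    then show ?thesis by (rule UnI1)
  next
    case True
    define w where "w = n div p"
    have nw: "n = p * w" using True by (simp add: w_def)
    have w0: "w > 0" using n nw by simp
    have B: "int p dvd int (n div p^2) + 1" if "p dvd w"
    proof (rule factB[OF p n _ h])
      show "p^2 dvd n" using that nw by (simp add: power2_eq_square)
    qed
    have nwp: "n div p^2 = w div p" using nw p2 by (simp add: power2_eq_square div_mult2_eq)
    have "w \<in> W"
    proof (rule inW[OF w0])
      fix q :: nat assume q: "prime q"
      show "multiplicity q w \<le> 1"
      proof (cases "2 \<le> multiplicity q w")
        case False then show ?thesis by simp
      next
        case True
        moreover have "q \<noteq> Suc 0" using q by auto
        ultimately have q2w: "q^2 dvd w" using power_dvd_iff_le_multiplicity[of w q 2] w0 q
          by (simp add: not_prime_unit)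
        show ?thesis
        proof (cases "q = p")
          case True
          then have "p dvd w" using q2w dvd_trans[of p "p^2" w] by (simp add: power2_eq_square)
          then have "int p dvd int (w div p) + 1" using B nwp by simp
          moreover have "p dvd w div p" using q2w True p2 by (auto simp: power2_eq_square)
          ultimately have "int p dvd 1" by (simp add: dvd_add_right_iff)
          then show ?thesis using p2 by simp
        next
          case False
          have "q^2 dvd n" using q2w nw by simp
          moreover have "q dvd n" using q2w nw dvd_trans[of q "q^2" w] by (simp add: power2_eq_square)
          ultimately show ?thesis using factA[OF p q False n _ h] by simp
        qed
      qed
    next
      fix q :: nat assume q: "prime q" and qw: "q dvd w"
      show "q dvd w div q + 1"
      proof (cases "q = p")
        case True
        then have "int p dvd int (w div p) + 1" using B qw nwp by simp
        then have "int p dvd int (w div p + 1)" by (simp add: add.commute)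
        then show ?thesis using True by (simp only: int_dvd_int_iff)
      next
        case False
        have qn: "q dvd n" using qw nw by simp
        have "int q dvd int (n div q) + int p" using factA[OF p q False n qn h] by simp
        moreover have "n div q = p * (w div q)" using nw qw by (auto simp: div_mult_swap)
        ultimately have "int q dvd int p * (int (w div q) + 1)" by (simp add: algebra_simps)
        moreover have "coprime (int q) (int p)" using q p False by (simp add: primes_coprime)
        ultimately have "int q dvd int (w div q) + 1" using coprime_dvd_mult_right_iff by blast
        then have "int q dvd int (w div q + 1)" by (simp add: add.commute)
        then show ?thesis by (simp only: int_dvd_int_iff)
      qed
    qed
    then show ?thesis using nw by auto
  qed
qed

end
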